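(* Consider any execution of Algorithm A with $m=n$ registers. Suppose that at time $\tau$ all entries of $\mathit{REG}$ equal a quadruplet $X$ with $X.\mathit{lvl}=\mathtt{up}$ and $X.\mathit{cfl}=\mathtt{false}$, and that at some time $\tau'$ all entries of $\mathit{REG}$ equal a quadruplet $Y$ with $Y.rd\ge X.rd$. Then $Y.\mathit{val}=X.\mathit{val}$.
   Context: Quadruplets, lexicographic order: a quadruplet is $\langle rd,\mathit{lvl},\mathit{cfl},\mathit{val}\rangle$ with $rd\in\mathbb{N}$, $\mathit{lvl}\in\{\mathtt{down}<\mathtt{up}\}$, $\mathit{cfl}\in\{\mathtt{false}<\mathtt{true}\}$, $\mathit{val}$ in a totally ordered value set with a least default $\bot$; quadruplets are totally ordered lexicographically. For a nonempty finite set $T$ of quadruplets with lexicographic maximum $\langle r,\ell,c,v\rangle$, $\mathrm{sup}(T)=\langle r,\ell,\mathit{conflict}(T),v\rangle$ where $\mathit{conflict}(T)$ holds iff some element of $T$ of round $r$ has conflict field $\mathtt{true}$, or the elements of $T$ of round $r$ carry at least two distinct values. Model and Algorithm A: $n$ anonymous asynchronous processes (any number may crash) share an atomic snapshot object $\mathit{REG}[1..m]$ of multi-writer registers, each initially $\langle 0,\mathtt{down},\mathtt{false},\bot\rangle$, with atomic operations $\mathrm{snapshot}()$ and $\mathrm{write}(x,X)$; executions are interleavings of atomic steps, one per time instant. A process proposing $v$ repeats forever: $\mathit{view}\leftarrow\mathrm{snapshot}()$; then (1) if all entries equal $\langle r,\mathtt{up},\mathtt{false},w\rangle$ with $r>0$,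 it returns (decides) $w$; (2) else if all entries equal $\langle r,\mathtt{down},\mathtt{false},w\rangle$ with $r>0$, it writes $\langle r+1,\mathtt{up},\mathtt{false},w\rangle$ into $\mathit{REG}[1]$; (3) else if all entries equal $\langle r,\ell,\mathtt{true},w\rangle$ with $r>0$, it writes $\langle r+1,\mathtt{down},\mathtt{false},w\rangle$ into $\mathit{REG}[1]$; (4) otherwise it computes $S=\mathrm{sup}(\{\mathit{view}[1],\dots,\mathit{view}[m],\langle 1,\mathtt{down},\mathtt{false},v\rangle\})$, lets $x$ be the smallest index with $\mathit{view}[x]\neq S$, and writes $S$ into $\mathit{REG}[x]$. *)

theory Defs
  imports Main "HOL-Library.Product_Lexorder"
begin

datatype lvl = Down | Up

datatype 'v quad = Q (rd: nat) (lv: lvl) (cfl: bool) (val: 'v)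

text \<open>Lexicographic order: rd, then lvl (Down < Up), then cfl (false < true), then val.\<close>
definition qkey :: "'v quad \<Rightarrow> nat \<times> bool \<times> bool \<times> 'v" where
  "qkey q = (rd q, lv q = Up, cfl q, val q)"

definition qle :: "'v::linorder quad \<Rightarrow> 'v quad \<Rightarrow> bool" where
  "qle a b \<longleftrightarrow> qkey a \<le> qkey b"

definition lexmax :: "'v::linorder quad set \<Rightarrow> 'v quad" where
  "lexmax T = (THE q. q \<in> T \<and> (\<forall>t\<in>T. qle t q))"

definition conflict :: "'v::linorder quad set \<Rightarrow> bool" where
  "conflict T \<longleftrightarrow> (let r = rd (lexmax T) in
     (\<exists>t\<in>T. rd t = r \<and> cfl t) \<or>
     (\<exists>t1\<in>T. \<exists>t2\<in>T. rd t1 = r \<and> rd t2 = r \<and> val t1 \<noteq> val t2))"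

definition qsup :: "'v::linorder quad set \<Rightarrow> 'v quad" where
  "qsup T = (let M = lexmax T in Q (rd M) (lv M) (conflict T) (val M))"

text \<open>Local state of a process: about to take a snapshot, about to perform a pending
  write of a quadruplet into a register, or decided (returned).\<close>
datatype 'v pstate = Snap | Wr nat "'v quad" | Decided 'v

type_synonym 'v config = "(nat \<Rightarrow> 'v quad) \<times> (nat \<Rightarrow> 'v pstate)"

definition init_quad :: "'v::{linorder,order_bot} quad" where
  "init_quad = Q 0 Down False bot"

definition init_config :: "'v::{linorder,order_bot} config" where
  "init_config = ((\<lambda>_. init_quad), (\<lambda>_. Snap))"

definition after_snap :: "nat \<Rightarrow> 'v::linorder \<Rightarrow> (nat \<Rightarrow> 'v quad) \<Rightarrow> 'v pstate" where
  "after_snap m v view =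
    (if \<exists>r w. r > 0 \<and> (\<forall>k\<in>{1..m}. view k = Q r Up False w) then
       Decided (SOME w. \<exists>r. r > 0 \<and> (\<forall>k\<in>{1..m}. view k = Q r Up False w))
     else if \<exists>r w. r > 0 \<and> (\<forall>k\<in>{1..m}. view k = Q r Down False w) then
       (let (r, w) = (SOME p. fst p > 0 \<and> (\<forall>k\<in>{1..m}. view k = Q (fst p) Down False (snd p)))
        in Wr 1 (Q (r + 1) Up False w))
     else if \<exists>r l w. r > 0 \<and> (\<forall>k\<in>{1..m}. view k = Q r l True w) then
       (let (r, w) = (SOME p. fst p > 0 \<and> (\<exists>l. \<forall>k\<in>{1..m}. view k = Q (fst p) l True (snd p)))
        in Wr 1 (Q (r + 1) Down False w))
     else
       (let S = qsup (view ` {1..m} \<union> {Q 1 Down False v});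
            x = (LEAST x. x \<in> {1..m} \<and> view x \<noteq> S)
        in Wr x S))"

definition pstep :: "nat \<Rightarrow> 'v::linorder \<Rightarrow> nat \<Rightarrow> 'v config \<Rightarrow> 'v config" where
  "pstep m v i c =
    (let (mem, pc) = c in
     case pc i of
       Snap \<Rightarrow> (mem, pc(i := after_snap m v mem))
     | Wr x X \<Rightarrow> (mem(x := X), pc(i := Snap))
     | Decided w \<Rightarrow> (mem, pc))"

text \<open>Crashed processes are simply never scheduled again; any finite execution is a prefix of
  such a sequence.  \<open>C t\<close> is the configuration at time \<open>t\<close>.\<close>
definition execution :: "nat \<Rightarrow> nat \<Rightarrow> (nat \<Rightarrow> 'v::{linorder,order_bot}) \<Rightarrow> (nat \<Rightarrow> 'v config) \<Rightarrow> bool" where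
  "execution n m prop C \<longleftrightarrow>
     C 0 = init_config \<and>
     (\<forall>t. \<exists>i\<in>{1..n}. C (Suc t) = pstep m (prop i) i (C t))"

definition all_regs_eq :: "nat \<Rightarrow> 'v config \<Rightarrow> 'v quad \<Rightarrow> bool" where
  "all_regs_eq m c X \<longleftrightarrow> (\<forall>k\<in>{1..m}. fst c k = X)"

end

theory Submission
  imports Defs
begin

lemma qkey_inj: "qkey a = qkey b \<Longrightarrow> a = b"
  apply (cases a; cases b)
  apply (auto simp: qkey_def)
  apply (metis lvl.exhaust)+
  done

lemma qle_refl: "qle a a" by (simp add: qle_def)
lemma qle_trans: "qle a b \<Longrightarrow> qle b c \<Longrightarrow> qle a c" unfolding qle_def by (rule order_trans)
lemma qle_total: "qle a b \<or> qle b a" unfolding qle_def by (rule linear)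
lemma qle_antisym: "qle a b \<Longrightarrow> qle b a \<Longrightarrow> a = b"
  unfolding qle_def by (rule qkey_inj) (rule antisym)
lemma qle_rd: "qle a b \<Longrightarrow> rd a \<le> rd b" by (auto simp: qle_def qkey_def)
lemma qle_rd_less: "rd a < rd b \<Longrightarrow> qle a b" by (auto simp: qle_def qkey_def)

lemma lexmax_prop:
  assumes "finite T" "T \<noteq> {}"
  shows "lexmax T \<in> T \<and> (\<forall>t\<in>T. qle t (lexmax T))"
proof -
  have "Max (qkey ` T) \<in> qkey ` T" using assms by simp
  then obtain q where q: "q \<in> T" "qkey q = Max (qkey ` T)" by auto
  have mx: "\<forall>t\<in>T. qle t q" using q assms by (auto simp: qle_def)
  have "lexmax T = q" unfolding lexmax_def
  proof (rule the_equality)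
    show "q \<in> T \<and> (\<forall>t\<in>T. qle t q)" using q mx by auto
  next
    fix q' assume "q' \<in> T \<and> (\<forall>t\<in>T. qle t q')"
    then show "q' = q" using mx q by (metis qle_antisym)
  qed
  then show ?thesis using q mx by auto
qed

definition good :: "'v::linorder quad \<Rightarrow> 'v quad \<Rightarrow> bool" where
  "good Z q \<longleftrightarrow> qle Z q \<and> (rd q = rd Z \<longrightarrow> cfl q \<or> val q = val Z)"

lemma good_refl: "good Z Z" by (simp add: good_def qle_refl)

lemma qsup_props:
  assumes "finite T" "T \<noteq> {}"
  shows "rd (qsup T) = rd (lexmax T)" "lv (qsup T) = lv (lexmax T)" "val (qsup T) = val (lexmax T)"
  by (simp_all add: qsup_def Let_def)

lemma qsup_good:
  assumes T: "finite T" and G: "G \<in> T" and gd: "good Z G"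
  shows "good Z (qsup T)"
proof -
  define M where "M = lexmax T"
  have ne: "T \<noteq> {}" using G by auto
  have M: "M \<in> T" "\<forall>t\<in>T. qle t M" using lexmax_prop[OF T ne] M_def by auto
  have S: "qsup T = Q (rd M) (lv M) (conflict T) (val M)" by (simp add: qsup_def M_def Let_def)
  have cM: "cfl M \<Longrightarrow> conflict T" using M(1) by (auto simp: conflict_def M_def Let_def)
  have MS: "qle M (qsup T)" using cM by (auto simp: S qle_def qkey_def le_bool_def)
  have GM: "qle G M" using M G by auto
  have ZS: "qle Z (qsup T)" using gd GM MS by (meson good_def qle_trans)
  moreover have "cfl (qsup T) \<or> val (qsup T) = val Z" if r: "rd (qsup T) = rd Z"
  proof -
    have "rd G \<le> rd M" using GM qle_rd by blast
    moreover have "rd Z \<le> rd G" using gd qle_rd good_def by blast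
    ultimately have rG: "rd G = rd M" "rd G = rd Z" using r S by auto
    show ?thesis
    proof (cases "cfl G")
      case True
      then have "conflict T" using G rG by (auto simp: conflict_def M_def Let_def)
      then show ?thesis by (simp add: S)
    next
      case False
      then have vG: "val G = val Z" using gd rG by (auto simp: good_def)
      show ?thesis
      proof (cases "val M = val G")
        case True then show ?thesis using vG S by simp
      next
        case False
        then have "conflict T" using G M(1) rG unfolding conflict_def M_def Let_def by metis
        then show ?thesis by (simp add: S)
      qed
    qed
  qed
  ultimately show ?thesis by (simp add: good_def)
qed


lemma some_pair: "\<exists>p. P p \<Longrightarrow> \<exists>a b. (SOME p. P p) = (a, b) \<and> P (a, b)"
  by (metis prod.collapse someI_ex)

lemma after_snap_cases:
  "(\<exists>w. after_snap n v view = Decided w) \<or>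
   (\<exists>r w. r > 0 \<and> (\<forall>k\<in>{1..n}. view k = Q r Down False w) \<and> after_snap n v view = Wr 1 (Q (r + 1) Up False w)) \<or>
   (\<exists>r l w. r > 0 \<and> (\<forall>k\<in>{1..n}. view k = Q r l True w) \<and> after_snap n v view = Wr 1 (Q (r + 1) Down False w)) \<or>
   (\<exists>x. after_snap n v view = Wr x (qsup (view ` {1..n} \<union> {Q 1 Down False v})))"
proof (cases "\<exists>r w. r > 0 \<and> (\<forall>k\<in>{1..n}. view k = Q r Up False w)")
  case True
  then have "after_snap n v view = Decided (SOME w. \<exists>r. r > 0 \<and> (\<forall>k\<in>{1..n}. view k = Q r Up False w))"
    unfolding after_snap_def by (rule if_P)
  then show ?thesis by (rule disjI1[OF exI])
next
  case c1: False
  show ?thesis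
  proof (cases "\<exists>r w. r > 0 \<and> (\<forall>k\<in>{1..n}. view k = Q r Down False w)")
    case True
    then have "\<exists>p. fst p > 0 \<and> (\<forall>k\<in>{1..n}. view k = Q (fst p) Down False (snd p))" by auto
    from some_pair[OF this] obtain r w where rw: "(SOME p. fst p > 0 \<and> (\<forall>k\<in>{1..n}. view k = Q (fst p) Down False (snd p))) = (r, w)"
      and B: "fst (r, w) > 0 \<and> (\<forall>k\<in>{1..n}. view k = Q (fst (r, w)) Down False (snd (r, w)))"
      by blast
    from B have r0: "r > 0" and rw2: "\<forall>k\<in>{1..n}. view k = Q r Down False w" by simp_all
    have "after_snap n v view = Wr 1 (Q (r + 1) Up False w)"
      unfolding after_snap_def if_not_P[OF c1] if_P[OF True] rw(1) by simp
    then have "\<exists>r w. r > 0 \<and> (\<forall>k\<in>{1..n}. view k = Q r Down False w) \<and> after_snap n v view = Wr 1 (Q (r + 1) Up False w)"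
      using rw2 r0 by blast
    then show ?thesis by (rule disjI2[OF disjI1])
  next
    case c2: False
    show ?thesis
    proof (cases "\<exists>r l w. r > 0 \<and> (\<forall>k\<in>{1..n}. view k = Q r l True w)")
      case True
      then have "\<exists>p. fst p > 0 \<and> (\<exists>l. \<forall>k\<in>{1..n}. view k = Q (fst p) l True (snd p))" by auto
      from some_pair[OF this] obtain r w where rw: "(SOME p. fst p > 0 \<and> (\<exists>l. \<forall>k\<in>{1..n}. view k = Q (fst p) l True (snd p))) = (r, w)"
        and B: "fst (r, w) > 0 \<and> (\<exists>l. \<forall>k\<in>{1..n}. view k = Q (fst (r, w)) l True (snd (r, w)))"
        by blast
      from B have r0: "r > 0" and rw2: "\<exists>l. \<forall>k\<in>{1..n}. view k = Q r l True w" by simp_all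
      have "after_snap n v view = Wr 1 (Q (r + 1) Down False w)"
        unfolding after_snap_def if_not_P[OF c1] if_not_P[OF c2] if_P[OF True] rw(1) by simp
      then have "\<exists>r l w. r > 0 \<and> (\<forall>k\<in>{1..n}. view k = Q r l True w) \<and> after_snap n v view = Wr 1 (Q (r + 1) Down False w)"
        using rw2 r0 by blast
      then show ?thesis by (rule disjI2[OF disjI2[OF disjI1]])
    next
      case c3: False
      have "after_snap n v view = Wr (LEAST x. x \<in> {1..n} \<and> view x \<noteq> qsup (view ` {1..n} \<union> {Q 1 Down False v})) (qsup (view ` {1..n} \<union> {Q 1 Down False v}))"
        unfolding after_snap_def if_not_P[OF c1] if_not_P[OF c2] if_not_P[OF c3] Let_def by (rule refl)
      then show ?thesis by (rule disjI2[OF disjI2[OF disjI2[OF exI]]])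
    qed
  qed
qed

lemma after_snap_good:
  assumes k0: "k0 \<in> {1..n}" "good Z (view k0)"
  shows "(\<exists>w. after_snap n v view = Decided w) \<or> (\<exists>x S. after_snap n v view = Wr x S \<and> good Z S)"
proof -
  have rdZ: "rd Z \<le> rd (view k0)" using k0 qle_rd good_def by blast
  consider (a) "\<exists>w. after_snap n v view = Decided w"
    | (b) r w where "\<forall>k\<in>{1..n}. view k = Q r Down False w" "after_snap n v view = Wr 1 (Q (r + 1) Up False w)"
    | (c) r l w where "\<forall>k\<in>{1..n}. view k = Q r l True w" "after_snap n v view = Wr 1 (Q (r + 1) Down False w)"
    | (d) x where "after_snap n v view = Wr x (qsup (view ` {1..n} \<union> {Q 1 Down False v}))"
    using after_snap_cases[of n v view] by blast
  then show ?thesis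
  proof cases
    case a then show ?thesis by blast
  next
    case b
    then have "rd (view k0) = r" using k0 by auto
    then show ?thesis using b rdZ by (auto simp: good_def intro!: qle_rd_less)
  next
    case c
    then have "rd (view k0) = r" using k0 by auto
    then show ?thesis using c rdZ by (auto simp: good_def intro!: qle_rd_less)
  next
    case d
    have "good Z (qsup (view ` {1..n} \<union> {Q 1 Down False v}))"
      by (rule qsup_good[of _ "view k0"]) (use k0 in auto)
    then show ?thesis using d by blast
  qed
qed

lemma after_snap_prov:
  assumes mem: "\<forall>k. P (view k)" and P1: "P (Q 1 Down False v)"
    and cl: "\<And>q q'. P q \<Longrightarrow> rd q' = rd q \<Longrightarrow> lv q' = lv q \<Longrightarrow> val q' = val q \<Longrightarrow> P q'"
    and up: "\<And>r w. r > 0 \<Longrightarrow> \<forall>k\<in>{1..n}. view k = Q r Down False w \<Longrightarrow> P (Q (r+1) Up False w)"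
    and dn: "\<And>r l w. r > 0 \<Longrightarrow> \<forall>k\<in>{1..n}. view k = Q r l True w \<Longrightarrow> P (Q (r+1) Down False w)"
    and as: "after_snap n v view = Wr x S"
  shows "P S"
proof -
  consider (a) "\<exists>w. after_snap n v view = Decided w"
    | (b) r w where "r > 0" "\<forall>k\<in>{1..n}. view k = Q r Down False w" "after_snap n v view = Wr 1 (Q (r + 1) Up False w)"
    | (c) r l w where "r > 0" "\<forall>k\<in>{1..n}. view k = Q r l True w" "after_snap n v view = Wr 1 (Q (r + 1) Down False w)"
    | (d) x where "after_snap n v view = Wr x (qsup (view ` {1..n} \<union> {Q 1 Down False v}))"
    using after_snap_cases[of n v view] by blast
  then show ?thesis
  proof cases
    case a then show ?thesis using as by auto
  next
    case b then show ?thesis using as up by auto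
  next
    case c then show ?thesis using as dn by auto
  next
    case d
    define T where "T = view ` {1..n} \<union> {Q 1 Down False v}"
    have fT: "finite T" "T \<noteq> {}" by (auto simp: T_def)
    have "lexmax T \<in> T" using lexmax_prop[OF fT] by simp
    then have "lexmax T = Q 1 Down False v \<or> (\<exists>k. lexmax T = view k)" unfolding T_def by auto
    then have PM: "P (lexmax T)" using mem P1 by auto
    have "P (qsup T)" using cl[OF PM qsup_props[OF fT]] .
    then show ?thesis using d as by (simp add: T_def)
  qed
qed

definition goodregs :: "nat \<Rightarrow> (nat \<Rightarrow> 'v::linorder quad) \<Rightarrow> 'v quad \<Rightarrow> nat set" where
  "goodregs n mem Z = {k\<in>{1..n}. good Z (mem k)}"

definition badpend :: "nat \<Rightarrow> (nat \<Rightarrow> 'v::linorder pstate) \<Rightarrow> 'v quad \<Rightarrow> nat set" where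
  "badpend n pc Z = {i\<in>{1..n}. \<exists>x S. pc i = Wr x S \<and> \<not> good Z S}"

lemma fin_goodregs: "finite (goodregs n mem Z)" by (simp add: goodregs_def)
lemma fin_badpend: "finite (badpend n pc Z)" by (simp add: badpend_def)

lemma pstep_Snap: "pc i = Snap \<Longrightarrow> pstep m v i (mem, pc) = (mem, pc(i := after_snap m v mem))"
  by (simp add: pstep_def)
lemma pstep_Wr: "pc i = Wr x S \<Longrightarrow> pstep m v i (mem, pc) = (mem(x := S), pc(i := Snap))"
  by (simp add: pstep_def)
lemma pstep_Dec: "pc i = Decided w \<Longrightarrow> pstep m v i (mem, pc) = (mem, pc)"
  by (simp add: pstep_def)

lemma step_pres:
  assumes i: "i \<in> {1..n}" and inv: "card (badpend n pc Z) < card (goodregs n mem Z)"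
    and st: "pstep n v i (mem, pc) = (mem', pc')"
  shows "card (badpend n pc' Z) < card (goodregs n mem' Z)"
proof (cases "pc i")
  case Snap
  then have e: "mem' = mem" "pc' = pc(i := after_snap n v mem)" using st by (auto simp: pstep_Snap)
  have "goodregs n mem Z \<noteq> {}" using inv by auto
  then obtain k0 where k0: "k0 \<in> {1..n}" "good Z (mem k0)" by (auto simp: goodregs_def)
  from after_snap_good[where view=mem and v=v, OF k0] have A:
    "(\<exists>w. after_snap n v mem = Decided w) \<or> (\<exists>x S. after_snap n v mem = Wr x S \<and> good Z S)" .
  have "badpend n pc' Z \<subseteq> badpend n pc Z" using A Snap unfolding e badpend_def by auto
  then have "card (badpend n pc' Z) \<le> card (badpend n pc Z)" by (rule card_mono[OF fin_badpend])
  then show ?thesis using inv e by simp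
next
  case (Wr x S)
  then have e: "mem' = mem(x := S)" "pc' = pc(i := Snap)" using st by (simp_all add: pstep_Wr)
  show ?thesis
  proof (cases "good Z S")
    case True
    have "badpend n pc' Z \<subseteq> badpend n pc Z" unfolding e badpend_def by auto
    then have 1: "card (badpend n pc' Z) \<le> card (badpend n pc Z)" by (rule card_mono[OF fin_badpend])
    have "goodregs n mem Z \<subseteq> goodregs n mem' Z" unfolding e goodregs_def using True by auto
    then have 2: "card (goodregs n mem Z) \<le> card (goodregs n mem' Z)" by (rule card_mono[OF fin_goodregs])
    show ?thesis using 1 2 inv by linarith
  next
    case False
    have ib: "i \<in> badpend n pc Z" using i Wr False by (auto simp: badpend_def)
    have "badpend n pc' Z \<subseteq> badpend n pc Z - {i}" unfolding e badpend_def by auto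
    then have "card (badpend n pc' Z) \<le> card (badpend n pc Z - {i})"
      by (rule card_mono[rotated]) (simp add: fin_badpend)
    also have "\<dots> = card (badpend n pc Z) - 1" using ib by (simp add: card_Diff_singleton_if)
    finally have 1: "card (badpend n pc' Z) \<le> card (badpend n pc Z) - 1" .
    have "goodregs n mem Z - {x} \<subseteq> goodregs n mem' Z" unfolding e goodregs_def by auto
    then have "card (goodregs n mem Z - {x}) \<le> card (goodregs n mem' Z)" by (rule card_mono[OF fin_goodregs])
    then have 2: "card (goodregs n mem Z) - 1 \<le> card (goodregs n mem' Z)"
      by (simp add: card_Diff_singleton_if split: if_splits)
    have "card (badpend n pc Z) \<ge> 1" using ib fin_badpend by (metis One_nat_def Suc_leI card_gt_0_iff empty_iff)
    then show ?thesis using 1 2 inv by linarith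
  qed
next
  case (Decided w)
  then show ?thesis using st inv by (simp add: pstep_Dec)
qed

lemma exec_n: "execution n m props C \<Longrightarrow> n \<ge> 1"
  unfolding execution_def by (metis atLeastAtMost_iff empty_iff order.trans)

lemma exec_step: "execution n m props C \<Longrightarrow> \<exists>i\<in>{1..n}. C (Suc t) = pstep m (props i) i (C t)"
  unfolding execution_def by blast

lemma all_regs_one: "all_regs_eq n c Y \<Longrightarrow> n \<ge> 1 \<Longrightarrow> fst c 1 = Y"
  by (simp add: all_regs_eq_def)

lemma inv_count:
  assumes ex: "execution n n props C"
  shows "\<forall>t0\<le>t. \<forall>Z. all_regs_eq n (C t0) Z \<longrightarrow> card (badpend n (snd (C t)) Z) < card (goodregs n (fst (C t)) Z)"
proof (induction t)
  case 0
  have n1: "n \<ge> 1" using exec_n[OF ex] .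
  have C0: "C 0 = init_config" using ex by (simp add: execution_def)
  show ?case
  proof (intro allI impI)
    fix t0 Z assume "t0 \<le> (0::nat)" "all_regs_eq n (C t0) Z"
    then have Z: "Z = init_quad" using all_regs_one[of n "C 0" Z] n1 by (simp add: C0 init_config_def)
    have "badpend n (snd (C 0)) Z = {}" by (simp add: badpend_def C0 init_config_def)
    moreover have "goodregs n (fst (C 0)) Z = {1..n}" by (auto simp: goodregs_def C0 init_config_def Z good_refl)
    ultimately show "card (badpend n (snd (C 0)) Z) < card (goodregs n (fst (C 0)) Z)" using n1 by simp
  qed
next
  case (Suc t)
  obtain i where i: "i \<in> {1..n}" and st: "C (Suc t) = pstep n (props i) i (C t)" using exec_step[OF ex] by blast
  obtain mem pc where ct: "C t = (mem, pc)" by (cases "C t")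
  obtain mem' pc' where cs: "C (Suc t) = (mem', pc')" by (cases "C (Suc t)")
  have st': "pstep n (props i) i (mem, pc) = (mem', pc')" using st ct cs by simp
  show ?case
  proof (intro allI impI)
    fix t0 Z assume t0: "t0 \<le> Suc t" and all: "all_regs_eq n (C t0) Z"
    show "card (badpend n (snd (C (Suc t))) Z) < card (goodregs n (fst (C (Suc t))) Z)"
    proof (cases "t0 \<le> t")
      case True
      then have "card (badpend n pc Z) < card (goodregs n mem Z)" using Suc.IH all ct by fastforce
      then show ?thesis using step_pres[OF i _ st'] cs by simp
    next
      case False
      then have t0s: "t0 = Suc t" using t0 by simp
      show ?thesis
      proof (cases "pc i")
        case (Wr x S)
        then have pci: "pc' i = Snap" using st' by (auto simp: pstep_Wr)
        have "badpend n pc' Z \<subseteq> {1..n} - {i}" using pci by (auto simp: badpend_def)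
        then have "card (badpend n pc' Z) \<le> card ({1..n} - {i})" by (rule card_mono[rotated]) simp
        also have "\<dots> = n - 1" using i by simp
        finally have 1: "card (badpend n pc' Z) \<le> n - 1" .
        have "goodregs n mem' Z = {1..n}" using all t0s cs by (auto simp: goodregs_def all_regs_eq_def good_refl)
        have n1: "1 \<le> n" using i by simp
        have "card (badpend n pc' Z) < n" using 1 n1 by linarith
        then show ?thesis using \<open>goodregs n mem' Z = {1..n}\<close> cs by simp
      next
        case Snap
        then have "mem' = mem" using st' by (simp add: pstep_Snap)
        then have "all_regs_eq n (C t) Z" using all t0s cs ct by (simp add: all_regs_eq_def)
        then have "card (badpend n pc Z) < card (goodregs n mem Z)" using Suc.IH ct by fastforce
        then show ?thesis using step_pres[OF i _ st'] cs by simp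
      next
        case (Decided w)
        then have "mem' = mem" using st' by (simp add: pstep_Dec)
        then have "all_regs_eq n (C t) Z" using all t0s cs ct by (simp add: all_regs_eq_def)
        then have "card (badpend n pc Z) < card (goodregs n mem Z)" using Suc.IH ct by fastforce
        then show ?thesis using step_pres[OF i _ st'] cs by simp
      qed
    qed
  qed
qed

lemma mono_good:
  assumes ex: "execution n n props C" and Z: "all_regs_eq n (C t0) Z" and le: "t0 \<le> t"
    and Y: "all_regs_eq n (C t) Y"
  shows "good Z Y"
proof -
  have "card (badpend n (snd (C t)) Z) < card (goodregs n (fst (C t)) Z)"
    using inv_count[OF ex, of t] Z le by blast
  then have "goodregs n (fst (C t)) Z \<noteq> {}" by auto
  then obtain k where "k \<in> {1..n}" "good Z (fst (C t) k)" by (auto simp: goodregs_def)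
  then show ?thesis using Y by (simp add: all_regs_eq_def)
qed

definition Prov :: "nat \<Rightarrow> (nat \<Rightarrow> 'v::linorder config) \<Rightarrow> nat \<Rightarrow> 'v quad \<Rightarrow> bool" where
  "Prov n C t q \<longleftrightarrow> (rd q \<le> 1 \<and> lv q = Down) \<or>
     (\<exists>t0\<le>t. \<exists>Z. all_regs_eq n (C t0) Z \<and> rd Z + 1 = rd q \<and> val Z = val q \<and>
        (lv q = Up \<longrightarrow> lv Z = Down \<and> \<not> cfl Z) \<and> (lv q = Down \<longrightarrow> cfl Z))"

lemma Prov_mono: "Prov n C t q \<Longrightarrow> t \<le> t' \<Longrightarrow> Prov n C t' q"
  unfolding Prov_def by (meson order_trans)

lemma Prov_cl: "Prov n C t q \<Longrightarrow> rd q' = rd q \<Longrightarrow> lv q' = lv q \<Longrightarrow> val q' = val q \<Longrightarrow> Prov n C t q'"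
  unfolding Prov_def by metis

lemma prov_inv:
  assumes ex: "execution n n props C"
  shows "(\<forall>k. Prov n C t (fst (C t) k)) \<and> (\<forall>i x S. snd (C t) i = Wr x S \<longrightarrow> Prov n C t S)"
proof (induction t)
  case 0
  have C0: "C 0 = init_config" using ex by (simp add: execution_def)
  show ?case by (simp add: C0 init_config_def init_quad_def Prov_def)
next
  case (Suc t)
  obtain i where i: "i \<in> {1..n}" and st: "C (Suc t) = pstep n (props i) i (C t)" using exec_step[OF ex] by blast
  obtain mem pc where ct: "C t = (mem, pc)" by (cases "C t")
  obtain mem' pc' where cs: "C (Suc t) = (mem', pc')" by (cases "C (Suc t)")
  have st': "pstep n (props i) i (mem, pc) = (mem', pc')" using st ct cs by simp
  have IHm: "\<forall>k. Prov n C (Suc t) (mem k)" using Suc.IH ct Prov_mono[of n C t _ "Suc t"] by auto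
  have IHp: "\<forall>j x S. pc j = Wr x S \<longrightarrow> Prov n C (Suc t) S" using Suc.IH ct Prov_mono[of n C t _ "Suc t"] by auto
  show ?case
  proof (cases "pc i")
    case Snap
    then have e: "mem' = mem" "pc' = pc(i := after_snap n (props i) mem)" using st' by (auto simp: pstep_Snap)
    have new: "Prov n C (Suc t) S" if as: "after_snap n (props i) mem = Wr x S" for x S
    proof (rule after_snap_prov[where P="Prov n C (Suc t)", OF IHm _ _ _ _ as])
      show "Prov n C (Suc t) (Q 1 Down False (props i))" by (simp add: Prov_def)
      show "\<And>q q'. Prov n C (Suc t) q \<Longrightarrow> rd q' = rd q \<Longrightarrow> lv q' = lv q \<Longrightarrow> val q' = val q \<Longrightarrow> Prov n C (Suc t) q'"
        by (rule Prov_cl)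
      show "Prov n C (Suc t) (Q (r + 1) Up False w)"
        if "0 < r" "\<forall>k\<in>{1..n}. mem k = Q r Down False w" for r w
      proof -
        have "all_regs_eq n (C t) (Q r Down False w)" using that ct by (simp add: all_regs_eq_def)
        then show ?thesis unfolding Prov_def by (intro disjI2 exI[of _ t]) auto
      qed
      show "Prov n C (Suc t) (Q (r + 1) Down False w)"
        if "0 < r" "\<forall>k\<in>{1..n}. mem k = Q r l True w" for r l w
      proof -
        have "all_regs_eq n (C t) (Q r l True w)" using that ct by (simp add: all_regs_eq_def)
        then show ?thesis unfolding Prov_def by (intro disjI2 exI[of _ t]) auto
      qed
    qed
    show ?thesis using IHm IHp new cs e by auto
  next
    case (Wr x S)
    then have e: "mem' = mem(x := S)" "pc' = pc(i := Snap)" using st' by (auto simp: pstep_Wr)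
    have "Prov n C (Suc t) S" using IHp Wr by blast
    then show ?thesis using IHm IHp cs e by auto
  next
    case (Decided w)
    then have e: "mem' = mem" "pc' = pc" using st' by (auto simp: pstep_Dec)
    then show ?thesis using IHm IHp cs by auto
  qed
qed

lemma all_prov:
  assumes ex: "execution n n props C" and Y: "all_regs_eq n (C t) Y"
  shows "Prov n C t Y"
proof -
  have "fst (C t) 1 = Y" using all_regs_one[OF Y exec_n[OF ex]] .
  then show ?thesis using prov_inv[OF ex, of t] by metis
qed

lemma same_round:
  assumes ex: "execution n n props C" and Z1: "all_regs_eq n (C t1) Z1" and Z2: "all_regs_eq n (C t2) Z2"
    and r: "rd Z1 = rd Z2" and c1: "\<not> cfl Z1" and c2: "\<not> cfl Z2"
  shows "val Z1 = val Z2"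
proof (cases "t1 \<le> t2")
  case True
  then have "good Z1 Z2" using mono_good[OF ex Z1 _ Z2] by blast
  then show ?thesis using r c2 by (auto simp: good_def)
next
  case False
  then have "good Z2 Z1" using mono_good[OF ex Z2 _ Z1] by simp
  then show ?thesis using r c1 by (auto simp: good_def)
qed

theorem lemma10:
  fixes n :: nat and props :: "nat \<Rightarrow> 'v::{linorder,order_bot}"
    and C :: "nat \<Rightarrow> 'v config" and X Y :: "'v quad" and \<tau> \<tau>' :: nat
  assumes "execution n n props C"
    and "all_regs_eq n (C \<tau>) X" and "lv X = Up" and "cfl X = False"
    and "all_regs_eq n (C \<tau>') Y" and "rd Y \<ge> rd X"
  shows "val Y = val X"
proof -
  note ex = assms(1) and X = assms(2) and lX = assms(3) and cX = assms(4)
  have "Prov n C \<tau> X" by (rule all_prov[OF ex X])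
  then obtain t1 Z1 where Z1: "all_regs_eq n (C t1) Z1" "rd Z1 + 1 = rd X" "val Z1 = val X"
      "lv Z1 = Down" "\<not> cfl Z1"
    using lX unfolding Prov_def by auto
  have claim: "\<forall>Y t'. all_regs_eq n (C t') Y \<longrightarrow> rd Y = rd X + k \<longrightarrow> val Y = val X" for k
  proof (induction k)
    case 0
    show ?case
    proof (intro allI impI)
      fix Y t' assume Y: "all_regs_eq n (C t') Y" and r: "rd Y = rd X + 0"
      show "val Y = val X"
      proof (cases "t' \<le> \<tau>")
        case True
        then have "good Y X" using mono_good[OF ex Y _ X] by blast
        then show ?thesis using r cX by (auto simp: good_def)
      next
        case False
        then have g: "good X Y" using mono_good[OF ex X _ Y] by simp
        show ?thesis
        proof (cases "val Y = val X")
          case True then show ?thesis .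
        next
          case False
          have q: "qle X Y" using g by (simp add: good_def)
          have lY: "lv Y = Up" using q r lX by (auto simp: qle_def qkey_def le_bool_def)
          have "Prov n C t' Y" by (rule all_prov[OF ex Y])
          then obtain t2 Z2 where Z2: "all_regs_eq n (C t2) Z2" "rd Z2 + 1 = rd Y" "val Z2 = val Y"
              "lv Z2 = Down" "\<not> cfl Z2"
            using lY unfolding Prov_def by auto
          have "val Z1 = val Z2" by (rule same_round[OF ex Z1(1) Z2(1)]) (use Z1 Z2 r in auto)
          then show ?thesis using Z1 Z2 by simp
        qed
      qed
    qed
  next
    case (Suc k)
    show ?case
    proof (intro allI impI)
      fix Y t' assume Y: "all_regs_eq n (C t') Y" and r: "rd Y = rd X + Suc k"
      have "Prov n C t' Y" by (rule all_prov[OF ex Y])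
      moreover have "rd Y \<ge> 2" using r Z1(2) by simp
      ultimately obtain t2 Z2 where Z2: "all_regs_eq n (C t2) Z2" "rd Z2 + 1 = rd Y" "val Z2 = val Y"
        unfolding Prov_def by auto
      have "val Z2 = val X" using Suc.IH Z2 r by auto
      then show "val Y = val X" using Z2 by simp
    qed
  qed
  show ?thesis using claim[of "rd Y - rd X"] assms(5,6) by auto
qed

end
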